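(* Let $M$ be a regular, residually finite monoid. Then the (right) action of $M$ on its $\mathcal{L}$-classes and the left action of $M$ on its $\mathcal{R}$-classes are both residually finite. Equivalently, for any $s,t\in M$ with $(s,t)\notin\mathcal{L}$ there is a right congruence $\rho$ of finite index on $M$ with $\mathcal{L}\subseteq\rho$ and $(s,t)\notin\rho$, and dually for $\mathcal{R}$ with left congruences.
   Context: A monoid $M$ is regular if for every $x\in M$ there is $y\in M$ with $xyx=x$. It is residually finite if any two distinct elements are separated by a homomorphism to a finite monoid. Green's relations: $x\mathcal{R}y$ iff $xM=yM$, $x\mathcal{L}y$ iff $Mx=My$. $\mathcal{L}$ is a right congruence, so $M$ acts on the right on $M/\mathcal{L}$ by $L_x\cdot m=L_{xm}$; dually $M$ acts on the left on $M/\mathcal{R}$. A right action of $M$ on a set $X$ is residually finite if for any distinct $x,y\in X$ there is an action of $M$ on a finite set $Y$ and a map $f:X\to Y$ with $f(xm)=f(x)m$ for all $x,m$ and $f(x)\neq f(y)$ (dually for left actions). A right congruence has finite index if it has finitely many classes. *)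

theory Defs
  imports "HOL-Algebra.Group"
begin

definition regular_monoid :: "('a, 'b) monoid_scheme \<Rightarrow> bool" where
  "regular_monoid M \<longleftrightarrow>
     (\<forall>x\<in>carrier M. \<exists>y\<in>carrier M. x \<otimes>\<^bsub>M\<^esub> y \<otimes>\<^bsub>M\<^esub> x = x)"

definition monoid_hom :: "('a, 'b) monoid_scheme \<Rightarrow> ('c, 'd) monoid_scheme \<Rightarrow> ('a \<Rightarrow> 'c) set" where
  "monoid_hom M N = {f. f \<in> hom M N \<and> f \<one>\<^bsub>M\<^esub> = \<one>\<^bsub>N\<^esub>}"

text \<open>Residual finiteness. Every finite monoid is isomorphic to one whose carrier is a
  set of natural numbers, so it suffices to range over finite monoids of type nat monoid.\<close>
definition residually_finite :: "('a, 'b) monoid_scheme \<Rightarrow> bool" where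
  "residually_finite M \<longleftrightarrow>
     (\<forall>x\<in>carrier M. \<forall>y\<in>carrier M. x \<noteq> y \<longrightarrow>
        (\<exists>(N :: nat monoid) f. monoid N \<and> finite (carrier N) \<and> f \<in> monoid_hom M N \<and> f x \<noteq> f y))"

definition greenL :: "('a, 'b) monoid_scheme \<Rightarrow> ('a \<times> 'a) set" where
  "greenL M = {(x, y). x \<in> carrier M \<and> y \<in> carrier M \<and>
      (\<lambda>m. m \<otimes>\<^bsub>M\<^esub> x) ` carrier M = (\<lambda>m. m \<otimes>\<^bsub>M\<^esub> y) ` carrier M}"

definition greenR :: "('a, 'b) monoid_scheme \<Rightarrow> ('a \<times> 'a) set" where
  "greenR M = {(x, y). x \<in> carrier M \<and> y \<in> carrier M \<and>
      (\<lambda>m. x \<otimes>\<^bsub>M\<^esub> m) ` carrier M = (\<lambda>m. y \<otimes>\<^bsub>M\<^esub> m) ` carrier M}"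

definition L_act :: "('a, 'b) monoid_scheme \<Rightarrow> 'a set \<Rightarrow> 'a \<Rightarrow> 'a set" where
  "L_act M C m = greenL M `` {(SOME x. x \<in> C) \<otimes>\<^bsub>M\<^esub> m}"

definition R_act :: "('a, 'b) monoid_scheme \<Rightarrow> 'a \<Rightarrow> 'a set \<Rightarrow> 'a set" where
  "R_act M m C = greenR M `` {m \<otimes>\<^bsub>M\<^esub> (SOME x. x \<in> C)}"

definition right_action :: "('a, 'b) monoid_scheme \<Rightarrow> 'y set \<Rightarrow> ('y \<Rightarrow> 'a \<Rightarrow> 'y) \<Rightarrow> bool" where
  "right_action M Y act \<longleftrightarrow>
     (\<forall>y\<in>Y. \<forall>m\<in>carrier M. act y m \<in> Y) \<and>
     (\<forall>y\<in>Y. act y \<one>\<^bsub>M\<^esub> = y) \<and>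
     (\<forall>y\<in>Y. \<forall>m\<in>carrier M. \<forall>n\<in>carrier M. act (act y m) n = act y (m \<otimes>\<^bsub>M\<^esub> n))"

definition left_action :: "('a, 'b) monoid_scheme \<Rightarrow> 'y set \<Rightarrow> ('a \<Rightarrow> 'y \<Rightarrow> 'y) \<Rightarrow> bool" where
  "left_action M Y act \<longleftrightarrow>
     (\<forall>y\<in>Y. \<forall>m\<in>carrier M. act m y \<in> Y) \<and>
     (\<forall>y\<in>Y. act \<one>\<^bsub>M\<^esub> y = y) \<and>
     (\<forall>y\<in>Y. \<forall>m\<in>carrier M. \<forall>n\<in>carrier M. act n (act m y) = act (n \<otimes>\<^bsub>M\<^esub> m) y)"

text \<open>Residual finiteness of an action on X (finite targets taken with elements in nat,
  which is no loss of generality since any finite set is in bijection with one of those).\<close>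
definition right_action_resfin :: "('a, 'b) monoid_scheme \<Rightarrow> 'x set \<Rightarrow> ('x \<Rightarrow> 'a \<Rightarrow> 'x) \<Rightarrow> bool" where
  "right_action_resfin M X act \<longleftrightarrow>
     (\<forall>x\<in>X. \<forall>y\<in>X. x \<noteq> y \<longrightarrow>
        (\<exists>(Y :: nat set) (b :: nat \<Rightarrow> 'a \<Rightarrow> nat) f.
           finite Y \<and> right_action M Y b \<and> f \<in> X \<rightarrow> Y \<and>
           (\<forall>z\<in>X. \<forall>m\<in>carrier M. f (act z m) = b (f z) m) \<and> f x \<noteq> f y))"

definition left_action_resfin :: "('a, 'b) monoid_scheme \<Rightarrow> 'x set \<Rightarrow> ('a \<Rightarrow> 'x \<Rightarrow> 'x) \<Rightarrow> bool" where
  "left_action_resfin M X act \<longleftrightarrow>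
     (\<forall>x\<in>X. \<forall>y\<in>X. x \<noteq> y \<longrightarrow>
        (\<exists>(Y :: nat set) (b :: 'a \<Rightarrow> nat \<Rightarrow> nat) f.
           finite Y \<and> left_action M Y b \<and> f \<in> X \<rightarrow> Y \<and>
           (\<forall>z\<in>X. \<forall>m\<in>carrier M. f (act m z) = b m (f z)) \<and> f x \<noteq> f y))"

definition right_congruence :: "('a, 'b) monoid_scheme \<Rightarrow> ('a \<times> 'a) set \<Rightarrow> bool" where
  "right_congruence M \<rho> \<longleftrightarrow> equiv (carrier M) \<rho> \<and>
     (\<forall>s t m. (s, t) \<in> \<rho> \<longrightarrow> m \<in> carrier M \<longrightarrow> (s \<otimes>\<^bsub>M\<^esub> m, t \<otimes>\<^bsub>M\<^esub> m) \<in> \<rho>)"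

definition left_congruence :: "('a, 'b) monoid_scheme \<Rightarrow> ('a \<times> 'a) set \<Rightarrow> bool" where
  "left_congruence M \<rho> \<longleftrightarrow> equiv (carrier M) \<rho> \<and>
     (\<forall>s t m. (s, t) \<in> \<rho> \<longrightarrow> m \<in> carrier M \<longrightarrow> (m \<otimes>\<^bsub>M\<^esub> s, m \<otimes>\<^bsub>M\<^esub> t) \<in> \<rho>)"

definition finite_index :: "('a, 'b) monoid_scheme \<Rightarrow> ('a \<times> 'a) set \<Rightarrow> bool" where
  "finite_index M \<rho> \<longleftrightarrow> finite (carrier M // \<rho>)"

end

theory Submission
  imports Defs
begin

lemma mh_mult: "f \<in> monoid_hom M N \<Longrightarrow> x \<in> carrier M \<Longrightarrow> y \<in> carrier M \<Longrightarrow>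
   f (x \<otimes>\<^bsub>M\<^esub> y) = f x \<otimes>\<^bsub>N\<^esub> f y"
  by (auto simp: monoid_hom_def hom_def)

lemma mh_closed: "f \<in> monoid_hom M N \<Longrightarrow> x \<in> carrier M \<Longrightarrow> f x \<in> carrier N"
  by (auto simp: monoid_hom_def hom_def)

lemma mh_one: "f \<in> monoid_hom M N \<Longrightarrow> f \<one>\<^bsub>M\<^esub> = \<one>\<^bsub>N\<^esub>"
  by (auto simp: monoid_hom_def)

definition Gset :: "('a,'b) monoid_scheme \<Rightarrow> ('c,'d) monoid_scheme \<Rightarrow> ('a \<Rightarrow> 'c) \<Rightarrow> 'a \<Rightarrow> 'c set" where
  "Gset M N \<phi> x = (\<lambda>m. \<phi> m \<otimes>\<^bsub>N\<^esub> \<phi> x) ` carrier M"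

lemma Gset_sub: "monoid N \<Longrightarrow> \<phi> \<in> monoid_hom M N \<Longrightarrow> x \<in> carrier M \<Longrightarrow> Gset M N \<phi> x \<subseteq> carrier N"
  unfolding Gset_def by (auto intro: monoid.m_closed[of N] mh_closed[of \<phi> M N])

lemma Gset_mult:
  assumes "monoid M" "monoid N" "\<phi> \<in> monoid_hom M N" "x \<in> carrier M" "m \<in> carrier M"
  shows "Gset M N \<phi> (x \<otimes>\<^bsub>M\<^esub> m) = (\<lambda>a. a \<otimes>\<^bsub>N\<^esub> \<phi> m) ` Gset M N \<phi> x"
proof -
  have "\<And>k. k \<in> carrier M \<Longrightarrow> \<phi> k \<otimes>\<^bsub>N\<^esub> \<phi> (x \<otimes>\<^bsub>M\<^esub> m) = (\<phi> k \<otimes>\<^bsub>N\<^esub> \<phi> x) \<otimes>\<^bsub>N\<^esub> \<phi> m"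
    using assms by (simp add: mh_mult mh_closed monoid.m_assoc)
  then show ?thesis unfolding Gset_def image_image by (rule image_cong[OF refl])
qed

lemma Gset_L:
  assumes "monoid M" "monoid N" "\<phi> \<in> monoid_hom M N" "(x, y) \<in> greenL M"
  shows "Gset M N \<phi> x = Gset M N \<phi> y"
proof -
  have xy: "x \<in> carrier M" "y \<in> carrier M"
    and eq: "(\<lambda>m. m \<otimes>\<^bsub>M\<^esub> x) ` carrier M = (\<lambda>m. m \<otimes>\<^bsub>M\<^esub> y) ` carrier M"
    using assms(4) by (auto simp: greenL_def)
  have "\<And>z. z \<in> carrier M \<Longrightarrow> Gset M N \<phi> z = \<phi> ` ((\<lambda>m. m \<otimes>\<^bsub>M\<^esub> z) ` carrier M)"
    unfolding Gset_def image_image using assms by (auto simp: mh_mult intro!: image_cong)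
  then show ?thesis using xy eq by simp
qed

lemma img_sub:
  assumes "monoid M" "t \<in> carrier M" "s \<in> (\<lambda>m. m \<otimes>\<^bsub>M\<^esub> t) ` carrier M"
  shows "(\<lambda>m. m \<otimes>\<^bsub>M\<^esub> s) ` carrier M \<subseteq> (\<lambda>m. m \<otimes>\<^bsub>M\<^esub> t) ` carrier M"
proof
  fix z assume "z \<in> (\<lambda>m. m \<otimes>\<^bsub>M\<^esub> s) ` carrier M"
  then obtain m where m: "m \<in> carrier M" "z = m \<otimes>\<^bsub>M\<^esub> s" by auto
  obtain a where a: "a \<in> carrier M" "s = a \<otimes>\<^bsub>M\<^esub> t" using assms(3) by auto
  have "z = (m \<otimes>\<^bsub>M\<^esub> a) \<otimes>\<^bsub>M\<^esub> t" using m a assms by (simp add: monoid.m_assoc)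
  then show "z \<in> (\<lambda>m. m \<otimes>\<^bsub>M\<^esub> t) ` carrier M" using m a assms by (auto intro: monoid.m_closed)
qed

lemma sep1:
  assumes M: "monoid M" "regular_monoid M" "residually_finite M"
    and st: "s \<in> carrier M" "t \<in> carrier M" and ns: "s \<notin> (\<lambda>m. m \<otimes>\<^bsub>M\<^esub> t) ` carrier M"
  shows "\<exists>(N :: nat monoid) \<phi>. monoid N \<and> finite (carrier N) \<and> \<phi> \<in> monoid_hom M N
          \<and> Gset M N \<phi> s \<noteq> Gset M N \<phi> t"
proof -
  obtain t' where t': "t' \<in> carrier M" "t \<otimes>\<^bsub>M\<^esub> t' \<otimes>\<^bsub>M\<^esub> t = t"
    using M(2) st unfolding regular_monoid_def by blast
  have stt: "s \<otimes>\<^bsub>M\<^esub> t' \<otimes>\<^bsub>M\<^esub> t \<in> carrier M" using M st t' by (simp add: monoid.m_closed)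
  have "s \<otimes>\<^bsub>M\<^esub> t' \<otimes>\<^bsub>M\<^esub> t \<in> (\<lambda>m. m \<otimes>\<^bsub>M\<^esub> t) ` carrier M"
    using M st t' by (auto intro: monoid.m_closed)
  then have ne: "s \<noteq> s \<otimes>\<^bsub>M\<^esub> t' \<otimes>\<^bsub>M\<^esub> t" using ns by auto
  obtain N :: "nat monoid" and \<phi> where N: "monoid N" "finite (carrier N)" "\<phi> \<in> monoid_hom M N"
    and d: "\<phi> s \<noteq> \<phi> (s \<otimes>\<^bsub>M\<^esub> t' \<otimes>\<^bsub>M\<^esub> t)"
    using M(3) st stt ne unfolding residually_finite_def by blast
  have "Gset M N \<phi> s \<noteq> Gset M N \<phi> t"
  proof
    assume eq: "Gset M N \<phi> s = Gset M N \<phi> t"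
    have "\<phi> s \<in> Gset M N \<phi> s"
      unfolding Gset_def using M N st
      by (auto simp: mh_one mh_closed intro!: image_eqI[where x="\<one>\<^bsub>M\<^esub>"])
    then have "\<phi> s \<in> Gset M N \<phi> t" using eq by simp
    then obtain a where a: "a \<in> carrier M" "\<phi> s = \<phi> a \<otimes>\<^bsub>N\<^esub> \<phi> t"
      unfolding Gset_def by auto
    have "\<phi> (s \<otimes>\<^bsub>M\<^esub> t' \<otimes>\<^bsub>M\<^esub> t) = \<phi> s \<otimes>\<^bsub>N\<^esub> \<phi> t' \<otimes>\<^bsub>N\<^esub> \<phi> t"
      using M N st t' by (simp add: mh_mult monoid.m_closed)
    also have "\<dots> = \<phi> a \<otimes>\<^bsub>N\<^esub> (\<phi> t \<otimes>\<^bsub>N\<^esub> \<phi> t' \<otimes>\<^bsub>N\<^esub> \<phi> t)"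
      using a N st t' by (simp add: mh_closed monoid.m_assoc monoid.m_closed)
    also have "\<phi> t \<otimes>\<^bsub>N\<^esub> \<phi> t' \<otimes>\<^bsub>N\<^esub> \<phi> t = \<phi> t"
      using M N st t' by (metis mh_mult monoid.m_closed)
    finally show False using a d by simp
  qed
  then show ?thesis using N by blast
qed

lemma sep:
  assumes M: "monoid M" "regular_monoid M" "residually_finite M"
    and st: "s \<in> carrier M" "t \<in> carrier M" and nL: "(s, t) \<notin> greenL M"
  shows "\<exists>(N :: nat monoid) \<phi>. monoid N \<and> finite (carrier N) \<and> \<phi> \<in> monoid_hom M N
          \<and> Gset M N \<phi> s \<noteq> Gset M N \<phi> t"
proof (cases "s \<in> (\<lambda>m. m \<otimes>\<^bsub>M\<^esub> t) ` carrier M")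
  case True
  have "t \<notin> (\<lambda>m. m \<otimes>\<^bsub>M\<^esub> s) ` carrier M"
  proof
    assume "t \<in> (\<lambda>m. m \<otimes>\<^bsub>M\<^esub> s) ` carrier M"
    then have "(s, t) \<in> greenL M" using img_sub[OF M(1) st(2) True] img_sub[OF M(1) st(1)] st
      unfolding greenL_def by blast
    then show False using nL by simp
  qed
  from sep1[OF M st(2,1) this] show ?thesis by metis
next
  case False
  from sep1[OF M st False] show ?thesis .
qed

lemma equivL: "monoid M \<Longrightarrow> equiv (carrier M) (greenL M)"
  by (auto simp: equiv_def refl_on_def sym_def trans_def greenL_def)

lemma some_in_class:
  assumes "equiv A r" "C \<in> A // r"
  shows "(SOME x. x \<in> C) \<in> C \<and> (SOME x. x \<in> C) \<in> A \<and> C = r `` {SOME x. x \<in> C}"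
proof -
  obtain x where x: "x \<in> A" "C = r `` {x}" using assms(2) by (rule quotientE)
  have "x \<in> C" using x assms(1) by (metis equiv_class_self)
  then have z: "(SOME x. x \<in> C) \<in> C" by (rule someI)
  then have xz: "(x, SOME x. x \<in> C) \<in> r" using x by simp
  then have "(SOME x. x \<in> C) \<in> A" using assms(1) unfolding equiv_def refl_on_def by auto
  moreover have "C = r `` {SOME x. x \<in> C}" using x(2) equiv_class_eq[OF assms(1) xz] by (rule trans)
  ultimately show ?thesis using z by (intro conjI)
qed

lemma cong_part:
  assumes M: "monoid M" and N: "monoid N" "finite (carrier N)" "\<phi> \<in> monoid_hom M N"
  defines "\<rho> \<equiv> {(x,y). x \<in> carrier M \<and> y \<in> carrier M \<and> Gset M N \<phi> x = Gset M N \<phi> y}"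
  shows "right_congruence M \<rho> \<and> finite_index M \<rho> \<and> greenL M \<subseteq> \<rho>"
proof (intro conjI)
  show "right_congruence M \<rho>"
    unfolding right_congruence_def
  proof (intro conjI allI impI)
    show "equiv (carrier M) \<rho>"
      unfolding \<rho>_def by (auto simp: equiv_def refl_on_def sym_def trans_def)
    fix s t m assume "(s, t) \<in> \<rho>" "m \<in> carrier M"
    then show "(s \<otimes>\<^bsub>M\<^esub> m, t \<otimes>\<^bsub>M\<^esub> m) \<in> \<rho>"
      unfolding \<rho>_def using M N by (auto simp: Gset_mult monoid.m_closed)
  qed
  show "finite_index M \<rho>"
    unfolding finite_index_def
  proof (rule finite_subset)
    show "carrier M // \<rho> \<subseteq> (\<lambda>S. {y \<in> carrier M. Gset M N \<phi> y = S}) ` Pow (carrier N)"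
    proof
      fix C assume "C \<in> carrier M // \<rho>"
      then obtain x where x: "x \<in> carrier M" "C = \<rho> `` {x}" by (rule quotientE)
      have "C = {y \<in> carrier M. Gset M N \<phi> y = Gset M N \<phi> x}" using x unfolding \<rho>_def by auto
      moreover have "Gset M N \<phi> x \<in> Pow (carrier N)" using Gset_sub[OF N(1,3) x(1)] by simp
      ultimately show "C \<in> (\<lambda>S. {y \<in> carrier M. Gset M N \<phi> y = S}) ` Pow (carrier N)" by blast
    qed
    show "finite ((\<lambda>S. {y \<in> carrier M. Gset M N \<phi> y = S}) ` Pow (carrier N))"
      using N(2) by simp
  qed
  show "greenL M \<subseteq> \<rho>"
    unfolding \<rho>_def using Gset_L[OF M N(1,3)] by (auto simp: greenL_def)
qed

lemma L_part:
  fixes M :: "('a, 'b) monoid_scheme"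
  assumes M: "monoid M" "regular_monoid M" "residually_finite M"
  shows "right_action_resfin M (carrier M // greenL M) (L_act M)
       \<and> (\<forall>s\<in>carrier M. \<forall>t\<in>carrier M. (s, t) \<notin> greenL M \<longrightarrow>
            (\<exists>\<rho>. right_congruence M \<rho> \<and> finite_index M \<rho> \<and> greenL M \<subseteq> \<rho> \<and> (s, t) \<notin> \<rho>))"
proof (intro conjI ballI impI)
  fix s t assume st: "s \<in> carrier M" "t \<in> carrier M" "(s, t) \<notin> greenL M"
  obtain N :: "nat monoid" and \<phi> where N: "monoid N" "finite (carrier N)" "\<phi> \<in> monoid_hom M N"
    and d: "Gset M N \<phi> s \<noteq> Gset M N \<phi> t" using sep[OF M st] by blast
  define \<rho> where "\<rho> \<equiv> {(x,y). x \<in> carrier M \<and> y \<in> carrier M \<and> Gset M N \<phi> x = Gset M N \<phi> y}"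
  have "right_congruence M \<rho> \<and> finite_index M \<rho> \<and> greenL M \<subseteq> \<rho>"
    using cong_part[OF M(1) N] unfolding \<rho>_def by blast
  moreover have "(s, t) \<notin> \<rho>" using d unfolding \<rho>_def by simp
  ultimately show "\<exists>\<rho>. right_congruence M \<rho> \<and> finite_index M \<rho> \<and> greenL M \<subseteq> \<rho> \<and> (s, t) \<notin> \<rho>"
    by blast
next
  have eqv: "equiv (carrier M) (greenL M)" using equivL[OF M(1)] .
  show "right_action_resfin M (carrier M // greenL M) (L_act M)"
    unfolding right_action_resfin_def
  proof (intro ballI impI)
    fix C1 C2 assume C: "C1 \<in> carrier M // greenL M" "C2 \<in> carrier M // greenL M" "C1 \<noteq> C2"
    define x1 where "x1 = (SOME x. x \<in> C1)"
    define x2 where "x2 = (SOME x. x \<in> C2)"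
    have x1: "x1 \<in> carrier M" "C1 = greenL M `` {x1}" using some_in_class[OF eqv C(1)] x1_def by auto
    have x2: "x2 \<in> carrier M" "C2 = greenL M `` {x2}" using some_in_class[OF eqv C(2)] x2_def by auto
    have nL: "(x1, x2) \<notin> greenL M" using C(3) x1 x2 equiv_class_eq[OF eqv] by metis
    obtain N :: "nat monoid" and \<phi> where N: "monoid N" "finite (carrier N)" "\<phi> \<in> monoid_hom M N"
      and d: "Gset M N \<phi> x1 \<noteq> Gset M N \<phi> x2" using sep[OF M x1(1) x2(1) nL] by blast
    define G where "G = Gset M N \<phi>"
    define Z where "Z = G ` carrier M"
    have "Z \<subseteq> Pow (carrier N)" unfolding Z_def G_def using Gset_sub[OF N(1,3)] by auto
    then have "finite Z" using N(2) by (meson finite_Pow_iff finite_subset)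
    then obtain enc :: "nat set \<Rightarrow> nat" and n where enc: "enc ` Z = {i. i < n}" "inj_on enc Z"
      using finite_imp_inj_to_nat_seg by blast
    define Y where "Y = enc ` Z"
    define b where "b = (\<lambda>y m. enc ((\<lambda>a. a \<otimes>\<^bsub>N\<^esub> \<phi> m) ` (inv_into Z enc y)))"
    define f where "f = (\<lambda>C. enc (G (SOME x. x \<in> C)))"
    have Gm: "G (x \<otimes>\<^bsub>M\<^esub> m) = (\<lambda>a. a \<otimes>\<^bsub>N\<^esub> \<phi> m) ` G x" if "x \<in> carrier M" "m \<in> carrier M" for x m
      unfolding G_def using Gset_mult[OF M(1) N(1,3) that] .
    have bG: "b (enc (G x)) m = enc (G (x \<otimes>\<^bsub>M\<^esub> m))" if "x \<in> carrier M" "m \<in> carrier M" for x m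
    proof -
      have "G x \<in> Z" using that Z_def by simp
      then have "inv_into Z enc (enc (G x)) = G x" using enc(2) by simp
      then show ?thesis unfolding b_def using Gm[OF that] by simp
    qed
    have "finite Y" using \<open>finite Z\<close> Y_def by simp
    moreover have "right_action M Y b"
      unfolding right_action_def
    proof (intro conjI ballI)
      fix y m assume "y \<in> Y" "m \<in> carrier M"
      then obtain x where x: "x \<in> carrier M" "y = enc (G x)" unfolding Y_def Z_def by auto
      show "b y m \<in> Y" using x bG \<open>m \<in> carrier M\<close> M(1) unfolding Y_def Z_def
        by (auto intro: monoid.m_closed)
    next
      fix y assume "y \<in> Y"
      then obtain x where x: "x \<in> carrier M" "y = enc (G x)" unfolding Y_def Z_def by auto
      show "b y \<one>\<^bsub>M\<^esub> = y" using x bG M(1) by (simp add: monoid.one_closed)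
    next
      fix y m m' assume "y \<in> Y" "m \<in> carrier M" "m' \<in> carrier M"
      moreover obtain x where x: "x \<in> carrier M" "y = enc (G x)" using \<open>y \<in> Y\<close> unfolding Y_def Z_def by auto
      ultimately show "b (b y m) m' = b y (m \<otimes>\<^bsub>M\<^esub> m')" using bG M(1)
        by (simp add: monoid.m_closed monoid.m_assoc)
    qed
    moreover have "f \<in> carrier M // greenL M \<rightarrow> Y"
    proof
      fix C assume "C \<in> carrier M // greenL M"
      then show "f C \<in> Y" using some_in_class[OF eqv] unfolding f_def Y_def Z_def by blast
    qed
    moreover have "\<forall>z\<in>carrier M // greenL M. \<forall>m\<in>carrier M. f (L_act M z m) = b (f z) m"
    proof (intro ballI)
      fix C m assume Cm: "C \<in> carrier M // greenL M" "m \<in> carrier M"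
      define x where "x = (SOME x. x \<in> C)"
      have x: "x \<in> carrier M" using some_in_class[OF eqv Cm(1)] x_def by auto
      have xm: "x \<otimes>\<^bsub>M\<^esub> m \<in> carrier M" using x Cm M(1) by (simp add: monoid.m_closed)
      have "L_act M C m = greenL M `` {x \<otimes>\<^bsub>M\<^esub> m}" unfolding L_act_def x_def ..
      moreover have "greenL M `` {x \<otimes>\<^bsub>M\<^esub> m} \<in> carrier M // greenL M"
        using xm by (simp add: quotientI)
      ultimately have "(SOME z. z \<in> L_act M C m) \<in> greenL M `` {x \<otimes>\<^bsub>M\<^esub> m}"
        using some_in_class[OF eqv] by metis
      then have "G (SOME z. z \<in> L_act M C m) = G (x \<otimes>\<^bsub>M\<^esub> m)"
        unfolding G_def using Gset_L[OF M(1) N(1,3)] by auto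
      then show "f (L_act M C m) = b (f C) m"
        unfolding f_def using bG[OF x Cm(2)] x_def by simp
    qed
    moreover have "f C1 \<noteq> f C2"
    proof -
      have "G x1 \<in> Z" "G x2 \<in> Z" using x1 x2 Z_def by auto
      then show ?thesis unfolding f_def using d enc(2) x1_def x2_def G_def
        by (metis inj_on_contraD)
    qed
    ultimately show "\<exists>(Y :: nat set) (b :: nat \<Rightarrow> 'a \<Rightarrow> nat) f.
           finite Y \<and> right_action M Y b \<and> f \<in> carrier M // greenL M \<rightarrow> Y \<and>
           (\<forall>z\<in>carrier M // greenL M. \<forall>m\<in>carrier M. f (L_act M z m) = b (f z) m) \<and> f C1 \<noteq> f C2"
      by blast
  qed
qed

definition opp :: "('a, 'b) monoid_scheme \<Rightarrow> 'a monoid" where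
  "opp M = \<lparr>carrier = carrier M, mult = (\<lambda>x y. y \<otimes>\<^bsub>M\<^esub> x), one = \<one>\<^bsub>M\<^esub>\<rparr>"

lemma opp_simps [simp]: "carrier (opp M) = carrier M" "x \<otimes>\<^bsub>opp M\<^esub> y = y \<otimes>\<^bsub>M\<^esub> x"
  "\<one>\<^bsub>opp M\<^esub> = \<one>\<^bsub>M\<^esub>"
  by (simp_all add: opp_def)

lemma opp_monoid: "monoid M \<Longrightarrow> monoid (opp M)"
  by (unfold_locales) (auto simp: monoid.m_assoc monoid.m_closed)

lemma opp_regular: "monoid M \<Longrightarrow> regular_monoid M \<Longrightarrow> regular_monoid (opp M)"
  unfolding regular_monoid_def by (simp add: monoid.m_assoc)

lemma opp_hom: "f \<in> monoid_hom M N \<Longrightarrow> f \<in> monoid_hom (opp M) (opp N)"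
  by (auto simp: monoid_hom_def hom_def)

lemma opp_resfin: "residually_finite M \<Longrightarrow> residually_finite (opp M)"
  unfolding residually_finite_def
  by simp (metis opp_hom opp_monoid opp_simps(1))

lemma opp_greenL: "greenL (opp M) = greenR M"
  by (simp add: greenL_def greenR_def)

lemma opp_Lact: "L_act (opp M) C m = R_act M m C"
  by (simp add: L_act_def R_act_def opp_greenL)

theorem mainTheorem2:
  fixes M :: "('a, 'b) monoid_scheme"
  assumes "monoid M" and "regular_monoid M" and "residually_finite M"
  shows "right_action_resfin M (carrier M // greenL M) (L_act M)
       \<and> left_action_resfin M (carrier M // greenR M) (R_act M)
       \<and> (\<forall>s\<in>carrier M. \<forall>t\<in>carrier M. (s, t) \<notin> greenL M \<longrightarrow>
            (\<exists>\<rho>. right_congruence M \<rho> \<and> finite_index M \<rho> \<and> greenL M \<subseteq> \<rho> \<and> (s, t) \<notin> \<rho>))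
       \<and> (\<forall>s\<in>carrier M. \<forall>t\<in>carrier M. (s, t) \<notin> greenR M \<longrightarrow>
            (\<exists>\<rho>. left_congruence M \<rho> \<and> finite_index M \<rho> \<and> greenR M \<subseteq> \<rho> \<and> (s, t) \<notin> \<rho>))"
proof -
  note A = L_part[OF assms]
  note B = L_part[OF opp_monoid[OF assms(1)] opp_regular[OF assms(1,2)] opp_resfin[OF assms(3)]]
  have ra: "right_action (opp M) Y b = left_action M Y (\<lambda>m y. b y m)" for Y and b :: "nat \<Rightarrow> 'a \<Rightarrow> nat"
    by (simp add: right_action_def left_action_def)
  have B1: "left_action_resfin M (carrier M // greenR M) (R_act M)"
  proof -
    have "right_action_resfin (opp M) (carrier M // greenR M) (\<lambda>C m. R_act M m C)"
      using B by (simp add: opp_greenL opp_Lact[abs_def])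
    then show ?thesis
      unfolding left_action_resfin_def
    proof (intro ballI impI)
      fix x y assume H: "right_action_resfin (opp M) (carrier M // greenR M) (\<lambda>C m. R_act M m C)"
        and xy: "x \<in> carrier M // greenR M" "y \<in> carrier M // greenR M" "x \<noteq> y"
      obtain Y :: "nat set" and b :: "nat \<Rightarrow> 'a \<Rightarrow> nat" and f where
        Yb: "finite Y" "right_action (opp M) Y b" "f \<in> carrier M // greenR M \<rightarrow> Y"
          "\<forall>z\<in>carrier M // greenR M. \<forall>m\<in>carrier M. f (R_act M m z) = b (f z) m" "f x \<noteq> f y"
        using H[unfolded right_action_resfin_def opp_simps, rule_format, OF xy] by blast
      have "left_action M Y (\<lambda>m y. b y m)" using Yb(2) ra by simp
      then show "\<exists>(Y :: nat set) (b :: 'a \<Rightarrow> nat \<Rightarrow> nat) f.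
           finite Y \<and> left_action M Y b \<and> f \<in> carrier M // greenR M \<rightarrow> Y \<and>
           (\<forall>z\<in>carrier M // greenR M. \<forall>m\<in>carrier M. f (R_act M m z) = b m (f z)) \<and> f x \<noteq> f y"
        using Yb by blast
    qed
  qed
  have B2: "\<forall>s\<in>carrier M. \<forall>t\<in>carrier M. (s, t) \<notin> greenR M \<longrightarrow>
            (\<exists>\<rho>. left_congruence M \<rho> \<and> finite_index M \<rho> \<and> greenR M \<subseteq> \<rho> \<and> (s, t) \<notin> \<rho>)"
  proof -
    have "right_congruence (opp M) \<rho> = left_congruence M \<rho>" for \<rho>
      by (simp add: right_congruence_def left_congruence_def)
    moreover have "finite_index (opp M) \<rho> = finite_index M \<rho>" for \<rho>
      by (simp add: finite_index_def)
    ultimately show ?thesis using B by (simp add: opp_greenL)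
  qed
  show ?thesis using A B1 B2 by blast
qed

end
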